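(* Let $T$ be a tree with $n\geq 3$ vertices and maximum degree $\Delta$, and let $\delta_1$ be the minimum degree among the non-pendant vertices of $T$. Suppose that $m_{1,b}(T)=0$ for all $b\geq 4$ and that $\Delta-\delta_1\leq (2\delta_1-1)^{2}$. Then $GA(T)>ABC(T)$.
   Context: A vertex is pendant if it has degree $1$. $m_{a,b}(T)$ denotes the number of edges of $T$ joining a vertex of degree $a$ to a vertex of degree $b$. With $d_i$ the degree of vertex $v_i$, $GA(T)=\sum_{v_iv_j\in E(T)}\frac{2\sqrt{d_id_j}}{d_i+d_j}$ and $ABC(T)=\sum_{v_iv_j\in E(T)}\sqrt{\frac{d_i+d_j-2}{d_id_j}}$. *)

theory Defs
  imports Complex_Main
begin

definition adj :: "'a set set \<Rightarrow> ('a \<times> 'a) set" where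
  "adj E = {(u, v). {u, v} \<in> E}"

definition is_tree :: "'a set \<Rightarrow> 'a set set \<Rightarrow> bool" where
  "is_tree V E \<longleftrightarrow> finite V \<and> V \<noteq> {} \<and>
     (\<forall>e\<in>E. \<exists>u v. e = {u, v} \<and> u \<noteq> v \<and> u \<in> V \<and> v \<in> V) \<and>
     (\<forall>u\<in>V. \<forall>v\<in>V. (u, v) \<in> (adj E)\<^sup>*) \<and>
     card E = card V - 1"

definition deg :: "'a set set \<Rightarrow> 'a \<Rightarrow> nat" where
  "deg E v = card {e \<in> E. v \<in> e}"

definition max_degree :: "'a set \<Rightarrow> 'a set set \<Rightarrow> nat" where
  "max_degree V E = Max (deg E ` V)"

definition min_nonpendant_degree :: "'a set \<Rightarrow> 'a set set \<Rightarrow> nat" where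
  "min_nonpendant_degree V E = Min {deg E v | v. v \<in> V \<and> deg E v \<noteq> 1}"

definition m_edges :: "'a set set \<Rightarrow> nat \<Rightarrow> nat \<Rightarrow> nat" where
  "m_edges E a b = card {e \<in> E. \<exists>u v. e = {u, v} \<and> u \<noteq> v \<and> deg E u = a \<and> deg E v = b}"

definition GA :: "'a set set \<Rightarrow> real" where
  "GA E = (\<Sum>e\<in>E. 2 * sqrt (\<Prod>v\<in>e. real (deg E v)) / (\<Sum>v\<in>e. real (deg E v)))"

definition ABC :: "'a set set \<Rightarrow> real" where
  "ABC E = (\<Sum>e\<in>E. sqrt (((\<Sum>v\<in>e. real (deg E v)) - 2) / (\<Prod>v\<in>e. real (deg E v))))"

end

theory Submission
  imports Defs
begin

lemma key_int:
  fixes a b :: int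
  assumes "2 \<le> a" "a \<le> b" "b - a \<le> (2*a-1)^2"
  shows "(a+b-2)*(a+b)^2 < 4*a^2*b^2"
proof -
  define d where "d = b - a"
  define D where "D = (2*a-1)^2"
  have b: "b = a + d" by (simp add: d_def)
  have d0: "0 \<le> d" and dD: "0 \<le> D - d" using assms by (auto simp: d_def D_def)
  have id: "4*a^2*b^2 - (a+b-2)*(a+b)^2 = d^2*(D-d) + (2*a-1)*d*(D-d) + (2*a+1)*d + 4*a^2*((a-1)^2+1)"
    unfolding b D_def by (simp add: algebra_simps power2_eq_square power3_eq_cube)
  have "0 \<le> d^2*(D-d)" using dD by simp
  moreover have "0 \<le> (2*a-1)*d*(D-d)" using d0 dD assms by simp
  moreover have "0 \<le> (2*a+1)*d" using d0 assms by simp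
  moreover have "0 < 4*a^2*((a-1)^2+1)" using assms by (simp add: add_pos_nonneg)
  ultimately show ?thesis using id by linarith
qed

lemma key_sym:
  fixes a b dl M :: int
  assumes "2 \<le> a" "2 \<le> b" "dl \<le> a" "dl \<le> b" "0 \<le> dl" "a \<le> M" "b \<le> M"
    "M - dl \<le> (2*dl-1)^2"
  shows "(a+b-2)*(a+b)^2 < 4*a^2*b^2"
proof (cases "a \<le> b")
  case True
  have "(2*a-1)^2 - (2*dl-1)^2 = (2*a-2*dl)*(2*a+2*dl-2)"
    by (simp add: algebra_simps power2_eq_square)
  moreover have "0 \<le> (2*a-2*dl)*(2*a+2*dl-2)" using assms by simp
  ultimately have "b - a \<le> (2*a-1)^2" using assms by linarith
  then show ?thesis using key_int[of a b] True assms by simp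
next
  case False
  have "(2*b-1)^2 - (2*dl-1)^2 = (2*b-2*dl)*(2*b+2*dl-2)"
    by (simp add: algebra_simps power2_eq_square)
  moreover have "0 \<le> (2*b-2*dl)*(2*b+2*dl-2)" using assms by simp
  ultimately have "a - b \<le> (2*b-1)^2" using assms by linarith
  then have "(b+a-2)*(b+a)^2 < 4*b^2*a^2" using key_int[of b a] False assms by simp
  then show ?thesis by (simp add: algebra_simps)
qed

lemma edge_real:
  fixes a b :: nat
  assumes "1 \<le> a" "1 \<le> b" "(int a+int b-2)*(int a+int b)^2 < 4*(int a)^2*(int b)^2"
  shows "sqrt ((real a + real b - 2) / (real a * real b)) < 2 * sqrt (real a * real b) / (real a + real b)"
proof -
  have "real_of_int ((int a+int b-2)*(int a+int b)^2) < real_of_int (4*(int a)^2*(int b)^2)"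
    using assms(3) by linarith
  hence h: "(real a + real b - 2)*(real a + real b)^2 < 4*(real a)^2*(real b)^2" by simp
  have pa: "real a > 0" "real b > 0" using assms by auto
  have p: "real a * real b > 0" and q: "(real a + real b)^2 > 0" using pa by auto
  have "(real a + real b - 2) / (real a * real b) = ((real a + real b - 2) * (real a + real b)^2) / ((real a * real b) * (real a + real b)^2)"
    using p q by simp
  also have "\<dots> < (4 * (real a * real b) * (real a * real b)) / ((real a * real b) * (real a + real b)^2)"
    apply (rule divide_strict_right_mono)
    subgoal using h by (simp add: power2_eq_square algebra_simps)
    subgoal using p q by simp
    done
  also have "\<dots> = 4 * (real a * real b) / (real a + real b)^2"
    using p q by simp
  finally have "(real a + real b - 2) / (real a * real b) < 4 * (real a * real b) / (real a + real b)^2" .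
  hence "sqrt ((real a + real b - 2) / (real a * real b)) < sqrt (4 * (real a * real b) / (real a + real b)^2)"
    by (rule real_sqrt_less_mono)
  also have "\<dots> = 2 * sqrt (real a * real b) / (real a + real b)"
    using pa by (simp add: real_sqrt_divide real_sqrt_mult)
  finally show ?thesis .
qed

lemma leaf_pair:
  assumes T: "is_tree V E" and fin: "finite E" and e: "{u,v} \<in> E"
    and du: "deg E u = 1" and dv: "deg E v = 1" and w: "w \<in> V" and uV: "u \<in> V"
  shows "w \<in> {u,v}"
proof -
  have "(u,w) \<in> (adj E)\<^sup>*" using T uV w unfolding is_tree_def by blast
  then show ?thesis
  proof (induction rule: rtrancl_induct)
    case base then show ?case by simp
  next
    case (step y z)
    have yz: "{y,z} \<in> E" using step(2) by (simp add: adj_def)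
    have dy: "deg E y = 1" using step(3) du dv by auto
    have fs: "finite {e\<in>E. y \<in> e}" using fin by simp
    have "{u,v} \<in> {e\<in>E. y \<in> e}" "{y,z} \<in> {e\<in>E. y \<in> e}" using e yz step(3) by auto
    then have "{y,z} = {u,v}" using dy fs unfolding deg_def
      by (metis One_nat_def card_1_singletonE singletonD)
    then show ?case by auto
  qed
qed

lemma deg_ge1:
  assumes "finite E" "e \<in> E" "u \<in> e"
  shows "1 \<le> deg E u"
proof -
  have "{e\<in>E. u \<in> e} \<noteq> {}" using assms by auto
  then show ?thesis unfolding deg_def using assms(1)
    by (simp add: Suc_leI card_gt_0_iff)
qed

theorem theorem3p8:
  fixes V :: "'a set" and E :: "'a set set"
  assumes "is_tree V E"
    and "card V \<ge> 3"
    and "\<forall>b\<ge>4. m_edges E 1 b = 0"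
    and "int (max_degree V E) - int (min_nonpendant_degree V E)
           \<le> (2 * int (min_nonpendant_degree V E) - 1)\<^sup>2"
  shows "GA E > ABC E"
proof -
  have finV: "finite V" using assms(1) unfolding is_tree_def by blast
  have cE: "card E = card V - 1" using assms(1) unfolding is_tree_def by blast
  have cpos: "card E > 0" using cE assms(2) by simp
  hence finE: "finite E" by (rule card_ge_0_finite)
  have neE: "E \<noteq> {}" using cpos by auto
  let ?dl = "min_nonpendant_degree V E"
  let ?M = "max_degree V E"
  show ?thesis unfolding GA_def ABC_def
  proof (rule sum_strict_mono[OF finE neE])
    fix e assume eE: "e \<in> E"
    obtain u v where e: "e = {u,v}" "u \<noteq> v" "u \<in> V" "v \<in> V"
      using assms(1) eE unfolding is_tree_def by blast
    have du: "1 \<le> deg E u" and dv: "1 \<le> deg E v" using deg_ge1[OF finE eE] e by auto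
    have low: "deg E x \<le> 3" if "deg E y = 1" "{x,y} = e" "x \<noteq> y" for x y
    proof (rule ccontr)
      assume "\<not> deg E x \<le> 3"
      hence m0: "m_edges E 1 (deg E x) = 0" using assms(3) by simp
      define S where "S = {e \<in> E. \<exists>u v. e = {u, v} \<and> u \<noteq> v \<and> deg E u = 1 \<and> deg E v = deg E x}"
      have ey: "e = {y, x}" using that(2) by (metis insert_commute)
      have "e \<in> S" unfolding S_def using eE ey that(1,3) by blast
      moreover have "finite S" unfolding S_def
        by (rule finite_subset[OF _ finE]) blast
      ultimately have "card S \<noteq> 0" using card_0_eq by blast
      moreover have "card S = 0" using m0 unfolding m_edges_def S_def .
      ultimately show False by blast
    qed
    have notboth: "\<not> (deg E u = 1 \<and> deg E v = 1)"
    proof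
      assume h: "deg E u = 1 \<and> deg E v = 1"
      have "V \<subseteq> {u,v}" using leaf_pair[OF assms(1) finE _ _ _ _ e(3)] eE e h by blast
      hence "card V \<le> card {u,v}" by (simp add: card_mono)
      also have "\<dots> \<le> 2" by (simp add: card_insert_le_m1)
      finally show False using assms(2) by simp
    qed
    have main: "(int (deg E u)+int (deg E v)-2)*(int (deg E u)+int (deg E v))^2 < 4*(int (deg E u))^2*(int (deg E v))^2"
    proof (cases "deg E u = 1 \<or> deg E v = 1")
      case True
      show ?thesis
      proof (cases "deg E u = 1")
        case True
        have "deg E v \<noteq> 1" using notboth True by blast
        moreover have "deg E v \<le> 3" proof (rule low[of u v])
          show "deg E u = 1" using True .
          show "{v,u} = e" using e(1) by (metis insert_commute)
          show "v \<noteq> u" using e(2) by blast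
        qed
        ultimately have "deg E v = 2 \<or> deg E v = 3" using dv by linarith
        then show ?thesis using True by auto
      next
        case False
        hence dv1: "deg E v = 1" using \<open>deg E u = 1 \<or> deg E v = 1\<close> by blast
        have "deg E u \<le> 3" using low[of v u] dv1 e(1,2) by blast
        hence "deg E u = 2 \<or> deg E u = 3" using du False by linarith
        then show ?thesis using dv1 by auto
      qed
    next
      case False
      have fs: "finite {deg E v |v. v \<in> V \<and> deg E v \<noteq> 1}" by (rule finite_subset[of _ "deg E ` V"]) (blast, simp add: finV)
      have mu: "deg E u \<in> {deg E v |v. v \<in> V \<and> deg E v \<noteq> 1}" using False e by blast
      have mv: "deg E v \<in> {deg E v |v. v \<in> V \<and> deg E v \<noteq> 1}" using False e by blast
      have l1: "?dl \<le> deg E u" "?dl \<le> deg E v" unfolding min_nonpendant_degree_def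
        using Min_le[OF fs mu] Min_le[OF fs mv] by auto
      have fi: "finite (deg E ` V)" using finV by (rule finite_imageI)
      have l2: "deg E u \<le> ?M" "deg E v \<le> ?M" unfolding max_degree_def
        using Max_ge[OF fi] e by auto
      have a2: "2 \<le> int (deg E u)" "2 \<le> int (deg E v)" using False du dv by auto
      have b1: "int ?dl \<le> int (deg E u)" "int ?dl \<le> int (deg E v)" using l1 by auto
      have b2: "int (deg E u) \<le> int ?M" "int (deg E v) \<le> int ?M" using l2 by auto
      show ?thesis
        by (rule key_sym[where dl="int ?dl" and M="int ?M", OF a2 b1 _ b2 assms(4)]) simp
    qed
    show "sqrt (((\<Sum>v\<in>e. real (deg E v)) - 2) / (\<Prod>v\<in>e. real (deg E v)))
          < 2 * sqrt (\<Prod>v\<in>e. real (deg E v)) / (\<Sum>v\<in>e. real (deg E v))"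
      using edge_real[OF du dv main] e by simp
  qed
qed

end
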